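(* Let $\vec{\mathcal G}$ be an ergodic graph of a deterministic two-player mean-payoff game and suppose $r\in\mathcal P^{\sigma,\tau}$ for some $(\sigma,\tau)\in\Xi$. Then for every edge $(i,j)\in E$ not used by $(\sigma,\tau)$ (i.e. $i\in V_{\max}$ and $j\ne\sigma(i)$, or $i\in V_{\min}$ and $j\ne\tau(i)$), $$Z_{ij}=\lambda^{\sigma,\tau}(r)+u^{\sigma,\tau}_i(r)-u^{\sigma,\tau}_j(r).$$
   Context: Setting: directed graph $\vec{\mathcal G}=([n],E)$ without multiple edges, each vertex having an outgoing edge, $[n]=V_{\max}\uplus V_{\min}$, weights $r\in\mathbb R^E$; $(x,r_{-ij})$ is $r$ with coordinate $ij$ replaced by $x$. Ergodic equation in $(\lambda,u)$: $\lambda+u_i=\max_{(i,j)\in E}\{r_{ij}+u_j\}$ ($i\in V_{\max}$), $\lambda+u_i=\min_{(i,j)\in E}\{r_{ij}+u_j\}$ ($i\in V_{\min}$); $u$ is a bias if $(\lambda,u)$ solves it; ergodic graph: solvable for every $r$. A pair of policies $(\sigma,\tau)$ is bias-induced if some bias makes every $\sigma(i)$ attain the max and every $\tau(i)$ attain the min. $\vec{\mathcal G}^{\sigma,\tau}$ keeps at each vertex only its chosen edge; $\Xi$: pairs for which it has exactly one directed cycle. For $(\sigma,\tau)\in\Xi$, $\lambda^{\sigma,\tau}(r)$ is the mean weight of that cycle and $u^{\sigma,\tau}(r)_l$ is the total weight, for edge weights $r_{ij}-\lambda^{\sigma,\tau}(r)$, of the path in $\vec{\mathcal G}^{\sigma,\tau}$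 from $l$ to the smallest-index vertex on the cycle. $\mathcal P^{\sigma,\tau}$: set of $r$ for which $(\sigma,\tau)$ is the only bias-induced pair; $\mathcal U=\bigcup_{\Xi}\mathcal P^{\sigma,\tau}$. For $i\in V_{\min}$: $Z_{ij}=\inf\{x: (x,r_{-ij})\in\mathcal U$ and the game with weights $(x,r_{-ij})$ has a bias-induced pair $(\sigma',\tau')\in\Xi$ with $\tau'(i)\ne j\}$; for $i\in V_{\max}$: $Z_{ij}=\sup\{x: (x,r_{-ij})\in\mathcal U$ and the game with weights $(x,r_{-ij})$ has a bias-induced pair $(\sigma',\tau')\in\Xi$ with $\sigma'(i)\ne j\}$. *)

theory Defs
  imports Complex_Main
begin

text \<open>Game graph: vertices V = {1..n}, edge set E, Max-vertices Vmax, Min-vertices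
  Vmin = V - Vmax. Weights r are functions on pairs; only values on E matter.\<close>

definition verts :: "nat \<Rightarrow> nat set" where
  "verts n = {1..n}"

definition Vmin :: "nat \<Rightarrow> nat set \<Rightarrow> nat set" where
  "Vmin n Vmax = verts n - Vmax"

definition game_graph :: "nat \<Rightarrow> (nat \<times> nat) set \<Rightarrow> nat set \<Rightarrow> bool" where
  "game_graph n E Vmax \<longleftrightarrow> E \<subseteq> verts n \<times> verts n \<and> Vmax \<subseteq> verts n
     \<and> (\<forall>i\<in>verts n. \<exists>j. (i, j) \<in> E)"

definition ergodic_eq ::
  "nat \<Rightarrow> (nat \<times> nat) set \<Rightarrow> nat set \<Rightarrow> (nat \<times> nat \<Rightarrow> real) \<Rightarrow> real \<Rightarrow> (nat \<Rightarrow> real) \<Rightarrow> bool" where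
  "ergodic_eq n E Vmax r lam u \<longleftrightarrow>
     (\<forall>i\<in>Vmax. lam + u i = Max {r (i, j) + u j | j. (i, j) \<in> E}) \<and>
     (\<forall>i\<in>Vmin n Vmax. lam + u i = Min {r (i, j) + u j | j. (i, j) \<in> E})"

definition is_bias :: "nat \<Rightarrow> (nat \<times> nat) set \<Rightarrow> nat set \<Rightarrow> (nat \<times> nat \<Rightarrow> real) \<Rightarrow> (nat \<Rightarrow> real) \<Rightarrow> bool" where
  "is_bias n E Vmax r u \<longleftrightarrow> (\<exists>lam. ergodic_eq n E Vmax r lam u)"

definition ergodic_graph :: "nat \<Rightarrow> (nat \<times> nat) set \<Rightarrow> nat set \<Rightarrow> bool" where
  "ergodic_graph n E Vmax \<longleftrightarrow> (\<forall>r. \<exists>lam u. ergodic_eq n E Vmax r lam u)"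

text \<open>A pair of (positional) policies; for definiteness they take the value 0
  (not a vertex) outside their domains, so that policies are identified with
  their restrictions to Vmax resp. Vmin.\<close>
definition policy_pair :: "nat \<Rightarrow> (nat \<times> nat) set \<Rightarrow> nat set \<Rightarrow> (nat \<Rightarrow> nat) \<Rightarrow> (nat \<Rightarrow> nat) \<Rightarrow> bool" where
  "policy_pair n E Vmax \<sigma> \<tau> \<longleftrightarrow>
     (\<forall>i\<in>Vmax. (i, \<sigma> i) \<in> E) \<and> (\<forall>i\<in>Vmin n Vmax. (i, \<tau> i) \<in> E) \<and>
     (\<forall>i. i \<notin> Vmax \<longrightarrow> \<sigma> i = 0) \<and> (\<forall>i. i \<notin> Vmin n Vmax \<longrightarrow> \<tau> i = 0)"

definition bias_induced ::
  "nat \<Rightarrow> (nat \<times> nat) set \<Rightarrow> nat set \<Rightarrow> (nat \<times> nat \<Rightarrow> real) \<Rightarrow> (nat \<Rightarrow> nat) \<Rightarrow> (nat \<Rightarrow> nat) \<Rightarrow> bool" where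
  "bias_induced n E Vmax r \<sigma> \<tau> \<longleftrightarrow> policy_pair n E Vmax \<sigma> \<tau> \<and>
     (\<exists>lam u. ergodic_eq n E Vmax r lam u \<and>
        (\<forall>i\<in>Vmax. r (i, \<sigma> i) + u (\<sigma> i) = Max {r (i, j) + u j | j. (i, j) \<in> E}) \<and>
        (\<forall>i\<in>Vmin n Vmax. r (i, \<tau> i) + u (\<tau> i) = Min {r (i, j) + u j | j. (i, j) \<in> E}))"

definition succ :: "nat set \<Rightarrow> (nat \<Rightarrow> nat) \<Rightarrow> (nat \<Rightarrow> nat) \<Rightarrow> nat \<Rightarrow> nat" where
  "succ Vmax \<sigma> \<tau> i = (if i \<in> Vmax then \<sigma> i else \<tau> i)"

definition cyclic_verts :: "nat set \<Rightarrow> (nat \<Rightarrow> nat) \<Rightarrow> nat set" where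
  "cyclic_verts V f = {i \<in> V. \<exists>k\<ge>1. (f ^^ k) i = i}"

definition orbit :: "(nat \<Rightarrow> nat) \<Rightarrow> nat \<Rightarrow> nat set" where
  "orbit f i = {(f ^^ k) i | k. True}"

definition cycles :: "nat set \<Rightarrow> (nat \<Rightarrow> nat) \<Rightarrow> nat set set" where
  "cycles V f = orbit f ` cyclic_verts V f"

definition Xi :: "nat \<Rightarrow> (nat \<times> nat) set \<Rightarrow> nat set \<Rightarrow> ((nat \<Rightarrow> nat) \<times> (nat \<Rightarrow> nat)) set" where
  "Xi n E Vmax = {(\<sigma>, \<tau>). policy_pair n E Vmax \<sigma> \<tau> \<and>
                   card (cycles (verts n) (succ Vmax \<sigma> \<tau>)) = 1}"

definition the_cycle :: "nat \<Rightarrow> nat set \<Rightarrow> (nat \<Rightarrow> nat) \<Rightarrow> (nat \<Rightarrow> nat) \<Rightarrow> nat set" where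
  "the_cycle n Vmax \<sigma> \<tau> = (THE C. C \<in> cycles (verts n) (succ Vmax \<sigma> \<tau>))"

definition lam_pol :: "nat \<Rightarrow> nat set \<Rightarrow> (nat \<Rightarrow> nat) \<Rightarrow> (nat \<Rightarrow> nat) \<Rightarrow> (nat \<times> nat \<Rightarrow> real) \<Rightarrow> real" where
  "lam_pol n Vmax \<sigma> \<tau> r =
     (let C = the_cycle n Vmax \<sigma> \<tau>; f = succ Vmax \<sigma> \<tau>
      in (\<Sum>i\<in>C. r (i, f i)) / real (card C))"

definition u_pol :: "nat \<Rightarrow> nat set \<Rightarrow> (nat \<Rightarrow> nat) \<Rightarrow> (nat \<Rightarrow> nat) \<Rightarrow> (nat \<times> nat \<Rightarrow> real) \<Rightarrow> nat \<Rightarrow> real" where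
  "u_pol n Vmax \<sigma> \<tau> r l =
     (let f = succ Vmax \<sigma> \<tau>; m = Min (the_cycle n Vmax \<sigma> \<tau>);
          k = (LEAST k. (f ^^ k) l = m); lam = lam_pol n Vmax \<sigma> \<tau> r
      in (\<Sum>t<k. r ((f ^^ t) l, (f ^^ Suc t) l) - lam))"

definition P_pol :: "nat \<Rightarrow> (nat \<times> nat) set \<Rightarrow> nat set \<Rightarrow> (nat \<Rightarrow> nat) \<Rightarrow> (nat \<Rightarrow> nat) \<Rightarrow> (nat \<times> nat \<Rightarrow> real) set" where
  "P_pol n E Vmax \<sigma> \<tau> = {r. \<forall>\<sigma>' \<tau>'. bias_induced n E Vmax r \<sigma>' \<tau>' \<longleftrightarrow> (\<sigma>', \<tau>') = (\<sigma>, \<tau>)}"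

definition U_set :: "nat \<Rightarrow> (nat \<times> nat) set \<Rightarrow> nat set \<Rightarrow> (nat \<times> nat \<Rightarrow> real) set" where
  "U_set n E Vmax = (\<Union>(\<sigma>, \<tau>)\<in>Xi n E Vmax. P_pol n E Vmax \<sigma> \<tau>)"

definition Z :: "nat \<Rightarrow> (nat \<times> nat) set \<Rightarrow> nat set \<Rightarrow> (nat \<times> nat \<Rightarrow> real) \<Rightarrow> nat \<Rightarrow> nat \<Rightarrow> real" where
  "Z n E Vmax r i j =
    (if i \<in> Vmin n Vmax then
       Inf {x. r((i, j) := x) \<in> U_set n E Vmax \<and>
               (\<exists>\<sigma>' \<tau>'. (\<sigma>', \<tau>') \<in> Xi n E Vmax \<and> bias_induced n E Vmax (r((i, j) := x)) \<sigma>' \<tau>' \<and> \<tau>' i \<noteq> j)}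
     else
       Sup {x. r((i, j) := x) \<in> U_set n E Vmax \<and>
               (\<exists>\<sigma>' \<tau>'. (\<sigma>', \<tau>') \<in> Xi n E Vmax \<and> bias_induced n E Vmax (r((i, j) := x)) \<sigma>' \<tau>' \<and> \<sigma>' i \<noteq> j)})"

end

theory Submission
  imports Defs
begin


lemma Max_char:
  assumes "finite {l. P l}" "\<exists>l. P l"
  shows "Max {g l | l. P l} = (M::real) \<longleftrightarrow> (\<exists>l. P l \<and> g l = M) \<and> (\<forall>l. P l \<longrightarrow> g l \<le> M)"
proof -
  have eq: "{g l | l. P l} = g ` {l. P l}" by auto
  have fin: "finite (g ` {l. P l})" using assms by simp
  have ne: "g ` {l. P l} \<noteq> {}" using assms by auto
  show ?thesis unfolding eq
  proof
    assume "Max (g ` {l. P l}) = M" thus "(\<exists>l. P l \<and> g l = M) \<and> (\<forall>l. P l \<longrightarrow> g l \<le> M)"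
      using Max_in[OF fin ne] Max_ge[OF fin] by auto
  next
    assume "(\<exists>l. P l \<and> g l = M) \<and> (\<forall>l. P l \<longrightarrow> g l \<le> M)"
    thus "Max (g ` {l. P l}) = M" by (intro Max_eqI[OF fin]) auto
  qed
qed

lemma Min_char:
  assumes "finite {l. P l}" "\<exists>l. P l"
  shows "Min {g l | l. P l} = (M::real) \<longleftrightarrow> (\<exists>l. P l \<and> g l = M) \<and> (\<forall>l. P l \<longrightarrow> M \<le> g l)"
proof -
  have eq: "{g l | l. P l} = g ` {l. P l}" by auto
  have fin: "finite (g ` {l. P l})" using assms by simp
  have ne: "g ` {l. P l} \<noteq> {}" using assms by auto
  show ?thesis unfolding eq
  proof
    assume "Min (g ` {l. P l}) = M" thus "(\<exists>l. P l \<and> g l = M) \<and> (\<forall>l. P l \<longrightarrow> M \<le> g l)"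
      using Min_in[OF fin ne] Min_le[OF fin] by auto
  next
    assume "(\<exists>l. P l \<and> g l = M) \<and> (\<forall>l. P l \<longrightarrow> M \<le> g l)"
    thus "Min (g ` {l. P l}) = M" by (intro Min_eqI[OF fin]) auto
  qed
qed

definition bi :: "nat \<Rightarrow> (nat \<times> nat) set \<Rightarrow> nat set \<Rightarrow> (nat \<times> nat \<Rightarrow> real) \<Rightarrow> (nat \<Rightarrow> nat) \<Rightarrow> (nat \<Rightarrow> nat) \<Rightarrow> real \<Rightarrow> (nat \<Rightarrow> real) \<Rightarrow> bool" where
  "bi n E Vmax r \<sigma> \<tau> lam u \<longleftrightarrow>
    (\<forall>k\<in>Vmax. (\<forall>l. (k,l)\<in>E \<longrightarrow> r(k,l)+u l \<le> lam+u k) \<and> r(k,\<sigma> k)+u(\<sigma> k) = lam+u k) \<and>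
    (\<forall>k\<in>Vmin n Vmax. (\<forall>l. (k,l)\<in>E \<longrightarrow> lam+u k \<le> r(k,l)+u l) \<and> r(k,\<tau> k)+u(\<tau> k) = lam+u k)"

definition strict :: "nat \<Rightarrow> (nat \<times> nat) set \<Rightarrow> nat set \<Rightarrow> (nat \<times> nat \<Rightarrow> real) \<Rightarrow> (nat \<Rightarrow> nat) \<Rightarrow> (nat \<Rightarrow> nat) \<Rightarrow> real \<Rightarrow> (nat \<Rightarrow> real) \<Rightarrow> bool" where
  "strict n E Vmax r \<sigma> \<tau> lam u \<longleftrightarrow> policy_pair n E Vmax \<sigma> \<tau> \<and> bi n E Vmax r \<sigma> \<tau> lam u \<and>
    (\<forall>k\<in>Vmax. \<forall>l. (k,l)\<in>E \<and> l \<noteq> \<sigma> k \<longrightarrow> r(k,l)+u l < lam+u k) \<and>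
    (\<forall>k\<in>Vmin n Vmax. \<forall>l. (k,l)\<in>E \<and> l \<noteq> \<tau> k \<longrightarrow> lam+u k < r(k,l)+u l)"

lemma fin_nbr: "game_graph n E Vmax \<Longrightarrow> finite {l. (k,l)\<in>E}"
  unfolding game_graph_def verts_def
  by (rule finite_subset[of _ "{1..n}"]) auto

lemma bias_induced_iff:
  assumes gg: "game_graph n E Vmax"
  shows "bias_induced n E Vmax r \<sigma> \<tau> \<longleftrightarrow> policy_pair n E Vmax \<sigma> \<tau> \<and> (\<exists>lam u. bi n E Vmax r \<sigma> \<tau> lam u)"
proof -
  have fin: "\<And>k. finite {l. (k,l)\<in>E}" using fin_nbr[OF gg] .
  show ?thesis
  proof
    assume "bias_induced n E Vmax r \<sigma> \<tau>"
    then obtain lam u where pp: "policy_pair n E Vmax \<sigma> \<tau>" and eq: "ergodic_eq n E Vmax r lam u"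
      and a1: "\<forall>i\<in>Vmax. r (i, \<sigma> i) + u (\<sigma> i) = Max {r (i, j) + u j | j. (i, j) \<in> E}"
      and a2: "\<forall>i\<in>Vmin n Vmax. r (i, \<tau> i) + u (\<tau> i) = Min {r (i, j) + u j | j. (i, j) \<in> E}"
      unfolding bias_induced_def by blast
    have "bi n E Vmax r \<sigma> \<tau> lam u" unfolding bi_def
    proof (rule conjI; intro ballI)
      fix k assume k: "k \<in> Vmax"
      have ex: "\<exists>l. (k,l)\<in>E" using pp k unfolding policy_pair_def by blast
      have m: "Max {r (k, j) + u j | j. (k, j) \<in> E} = lam + u k" using eq k unfolding ergodic_eq_def by auto
      show "(\<forall>l. (k,l)\<in>E \<longrightarrow> r(k,l)+u l \<le> lam+u k) \<and> r(k,\<sigma> k)+u(\<sigma> k) = lam+u k"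
        using m Max_char[OF fin ex, of "\<lambda>l. r(k,l) + u l" "lam + u k"] a1 k by auto
    next
      fix k assume k: "k \<in> Vmin n Vmax"
      have ex: "\<exists>l. (k,l)\<in>E" using pp k unfolding policy_pair_def by blast
      have m: "Min {r (k, j) + u j | j. (k, j) \<in> E} = lam + u k" using eq k unfolding ergodic_eq_def by auto
      show "(\<forall>l. (k,l)\<in>E \<longrightarrow> lam+u k \<le> r(k,l)+u l) \<and> r(k,\<tau> k)+u(\<tau> k) = lam+u k"
        using m Min_char[OF fin ex, of "\<lambda>l. r(k,l) + u l" "lam + u k"] a2 k by auto
    qed
    thus "policy_pair n E Vmax \<sigma> \<tau> \<and> (\<exists>lam u. bi n E Vmax r \<sigma> \<tau> lam u)" using pp by blast
  next
    assume "policy_pair n E Vmax \<sigma> \<tau> \<and> (\<exists>lam u. bi n E Vmax r \<sigma> \<tau> lam u)"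
    then obtain lam u where pp: "policy_pair n E Vmax \<sigma> \<tau>" and b: "bi n E Vmax r \<sigma> \<tau> lam u" by blast
    have mx: "\<And>k. k \<in> Vmax \<Longrightarrow> Max {r (k, j) + u j | j. (k, j) \<in> E} = lam + u k"
    proof -
      fix k assume k: "k \<in> Vmax"
      have ex: "\<exists>l. (k,l)\<in>E" using pp k unfolding policy_pair_def by blast
      have e: "(k, \<sigma> k) \<in> E" using pp k unfolding policy_pair_def by blast
      show "Max {r (k, j) + u j | j. (k, j) \<in> E} = lam + u k"
        using Max_char[OF fin ex, of "\<lambda>l. r(k,l) + u l" "lam + u k"] b k e unfolding bi_def by auto
    qed
    have mn: "\<And>k. k \<in> Vmin n Vmax \<Longrightarrow> Min {r (k, j) + u j | j. (k, j) \<in> E} = lam + u k"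
    proof -
      fix k assume k: "k \<in> Vmin n Vmax"
      have ex: "\<exists>l. (k,l)\<in>E" using pp k unfolding policy_pair_def by blast
      have e: "(k, \<tau> k) \<in> E" using pp k unfolding policy_pair_def by blast
      show "Min {r (k, j) + u j | j. (k, j) \<in> E} = lam + u k"
        using Min_char[OF fin ex, of "\<lambda>l. r(k,l) + u l" "lam + u k"] b k e unfolding bi_def by auto
    qed
    show "bias_induced n E Vmax r \<sigma> \<tau>" unfolding bias_induced_def ergodic_eq_def
      using pp b mx mn unfolding bi_def by (intro conjI exI[of _ lam] exI[of _ u]) auto
  qed
qed



lemma funpow_in: "f ` A \<subseteq> A \<Longrightarrow> a \<in> A \<Longrightarrow> (f ^^ k) a \<in> A"
  by (induction k) auto

lemma periodic_in_closed:
  assumes fin: "finite A" and cl: "f ` A \<subseteq> A" and a: "a \<in> A"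
  shows "\<exists>c\<in>A. \<exists>p\<ge>1. (f ^^ p) c = c"
proof -
  let ?g = "\<lambda>t. (f ^^ t) a"
  have "\<not> inj_on ?g {0..card A}"
  proof
    assume "inj_on ?g {0..card A}"
    moreover have "?g ` {0..card A} \<subseteq> A" using funpow_in[OF cl a] by auto
    ultimately have "card {0..card A} \<le> card A" using card_inj_on_le fin by blast
    thus False by simp
  qed
  then obtain x y where xy: "x \<in> {0..card A}" "y \<in> {0..card A}" "x \<noteq> y" "?g x = ?g y"
    unfolding inj_on_def by auto
  have "\<exists>x y. x < y \<and> ?g x = ?g y"
  proof (cases "x < y")
    case True thus ?thesis using xy by blast
  next
    case False thus ?thesis using xy by (intro exI[of _ y] exI[of _ x]) auto
  qed
  then obtain x y where xy: "x < y" "?g x = ?g y" by blast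
  have "(f ^^ (y - x)) (?g x) = ?g y"
  proof -
    have "(f ^^ (y - x)) (?g x) = (f ^^ (y - x + x)) a" by (simp add: funpow_add)
    also have "y - x + x = y" using xy(1) by simp
    finally show ?thesis .
  qed
  thus ?thesis using xy funpow_in[OF cl a] by (intro bexI[of _ "?g x"] exI[of _ "y - x"]) auto
qed

lemma orbit_sub: "f ` A \<subseteq> A \<Longrightarrow> c \<in> A \<Longrightarrow> orbit f c \<subseteq> A"
  unfolding orbit_def using funpow_in[of f A c] by auto

lemma orbit_closed: "f ` orbit f c \<subseteq> orbit f c"
proof
  fix x assume "x \<in> f ` orbit f c"
  then obtain k where "x = f ((f ^^ k) c)" unfolding orbit_def by blast
  hence "x = (f ^^ Suc k) c" by simp
  thus "x \<in> orbit f c" unfolding orbit_def by blast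
qed

lemma orbit_self: "c \<in> orbit f c"
  unfolding orbit_def by (auto intro!: exI[of _ 0])

lemma orbit_image:
  assumes "p \<ge> 1" "(f ^^ p) c = c"
  shows "f ` orbit f c = orbit f c"
proof
  show "f ` orbit f c \<subseteq> orbit f c" by (rule orbit_closed)
  show "orbit f c \<subseteq> f ` orbit f c"
  proof
    fix x assume "x \<in> orbit f c"
    then obtain k where k: "x = (f ^^ k) c" unfolding orbit_def by blast
    show "x \<in> f ` orbit f c"
    proof (cases k)
      case 0
      have "p = Suc (p - 1)" using assms(1) by simp
      hence "(f ^^ p) c = f ((f ^^ (p - 1)) c)" by (metis funpow.simps(2) o_apply)
      thus ?thesis using 0 k assms unfolding orbit_def by auto
    next
      case (Suc k') thus ?thesis using k unfolding orbit_def by auto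
    qed
  qed
qed

lemma cycle_in_closed:
  assumes finV: "finite V" and clV: "f ` V \<subseteq> V" and cyc: "cycles V f = {C}"
    and AV: "A \<subseteq> V" and clA: "f ` A \<subseteq> A" and a: "a \<in> A"
  shows "C \<subseteq> A"
proof -
  have finA: "finite A" using finV AV finite_subset by blast
  obtain c p where c: "c \<in> A" "p \<ge> 1" "(f ^^ p) c = c" using periodic_in_closed[OF finA clA a] by blast
  have "c \<in> cyclic_verts V f" using c AV unfolding cyclic_verts_def by blast
  hence "orbit f c \<in> cycles V f" unfolding cycles_def by blast
  hence "orbit f c = C" using cyc by blast
  thus ?thesis using orbit_sub[OF clA c(1)] by blast
qed

lemma cycle_props:
  assumes finV: "finite V" and clV: "f ` V \<subseteq> V" and cyc: "cycles V f = {C}"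
  shows "finite C" "C \<noteq> {}" "C \<subseteq> V" "f ` C = C"
proof -
  have "C \<in> cycles V f" using cyc by blast
  then obtain c where c: "c \<in> cyclic_verts V f" "C = orbit f c" unfolding cycles_def by blast
  then obtain p where p: "p \<ge> 1" "(f ^^ p) c = c" "c \<in> V" unfolding cyclic_verts_def by blast
  show "C \<subseteq> V" using orbit_sub[OF clV p(3)] c by simp
  thus "finite C" using finV finite_subset by blast
  show "C \<noteq> {}" using orbit_self c by fast
  show "f ` C = C" using orbit_image[OF p(1,2)] c by simp
qed



lemma fin_verts: "finite (verts n)" unfolding verts_def by simp

lemma f_verts:
  assumes gg: "game_graph n E Vmax" and pp: "policy_pair n E Vmax \<sigma> \<tau>" and k: "k \<in> verts n"
  shows "(k, succ Vmax \<sigma> \<tau> k) \<in> E" "succ Vmax \<sigma> \<tau> k \<in> verts n"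
proof -
  show e: "(k, succ Vmax \<sigma> \<tau> k) \<in> E"
  proof (cases "k \<in> Vmax")
    case True thus ?thesis using pp unfolding policy_pair_def succ_def by auto
  next
    case False hence "k \<in> Vmin n Vmax" using k unfolding Vmin_def by auto
    thus ?thesis using pp False unfolding policy_pair_def succ_def by auto
  qed
  thus "succ Vmax \<sigma> \<tau> k \<in> verts n" using gg unfolding game_graph_def by auto
qed

lemma f_img: "game_graph n E Vmax \<Longrightarrow> policy_pair n E Vmax \<sigma> \<tau> \<Longrightarrow>
   succ Vmax \<sigma> \<tau> ` verts n \<subseteq> verts n"
  using f_verts by blast

lemma Xi_cyc:
  assumes "(\<sigma>, \<tau>) \<in> Xi n E Vmax"
  shows "cycles (verts n) (succ Vmax \<sigma> \<tau>) = {the_cycle n Vmax \<sigma> \<tau>}"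
proof -
  have "card (cycles (verts n) (succ Vmax \<sigma> \<tau>)) = 1" using assms unfolding Xi_def by auto
  then obtain C where C: "cycles (verts n) (succ Vmax \<sigma> \<tau>) = {C}" by (rule card_1_singletonE)
  hence "the_cycle n Vmax \<sigma> \<tau> = C" unfolding the_cycle_def by simp
  thus ?thesis using C by simp
qed

lemma along_f:
  assumes gg: "game_graph n E Vmax" and b: "bi n E Vmax r \<sigma> \<tau> lam u" and k: "k \<in> verts n"
  shows "lam + u k = r (k, succ Vmax \<sigma> \<tau> k) + u (succ Vmax \<sigma> \<tau> k)"
proof (cases "k \<in> Vmax")
  case True thus ?thesis using b unfolding bi_def succ_def by auto
next
  case False hence "k \<in> Vmin n Vmax" using k unfolding Vmin_def by auto
  thus ?thesis using b False unfolding bi_def succ_def by auto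
qed

lemma lam_u_pol:
  assumes gg: "game_graph n E Vmax" and xi: "(\<sigma>, \<tau>) \<in> Xi n E Vmax"
    and eq: "\<forall>k\<in>verts n. lam + u k = r (k, succ Vmax \<sigma> \<tau> k) + u (succ Vmax \<sigma> \<tau> k)"
  shows "lam_pol n Vmax \<sigma> \<tau> r = lam"
    "\<And>l. l \<in> verts n \<Longrightarrow> u_pol n Vmax \<sigma> \<tau> r l = u l - u (Min (the_cycle n Vmax \<sigma> \<tau>))"
proof -
  let ?f = "succ Vmax \<sigma> \<tau>"
  let ?C = "the_cycle n Vmax \<sigma> \<tau>"
  have pp: "policy_pair n E Vmax \<sigma> \<tau>" using xi unfolding Xi_def by auto
  have img: "?f ` verts n \<subseteq> verts n" using f_img[OF gg pp] .
  note cyc = Xi_cyc[OF xi]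
  note cp = cycle_props[OF fin_verts img cyc]
  have inj: "inj_on ?f ?C" using cp(1,4) by (simp add: eq_card_imp_inj_on)
  have "(\<Sum>k\<in>?C. r (k, ?f k)) = (\<Sum>k\<in>?C. lam + u k - u (?f k))"
    using eq cp(3) by (intro sum.cong) (auto simp: algebra_simps)
  also have "\<dots> = real (card ?C) * lam + (\<Sum>k\<in>?C. u k) - (\<Sum>k\<in>?C. u (?f k))"
    by (simp add: sum.distrib sum_subtractf)
  also have "(\<Sum>k\<in>?C. u (?f k)) = (\<Sum>k\<in>?f ` ?C. u k)" using sum.reindex[OF inj, of u] by simp
  also have "\<dots> = (\<Sum>k\<in>?C. u k)" using cp(4) by simp
  finally have s: "(\<Sum>k\<in>?C. r (k, ?f k)) = real (card ?C) * lam" by simp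
  have "card ?C > 0" using cp(1,2) by (simp add: card_gt_0_iff)
  thus "lam_pol n Vmax \<sigma> \<tau> r = lam" unfolding lam_pol_def Let_def using s by simp
  fix l assume l: "l \<in> verts n"
  let ?m = "Min ?C"
  have mC: "?m \<in> ?C" using cp(1,2) by simp
  have "?C \<subseteq> orbit ?f l"
    by (rule cycle_in_closed[OF fin_verts img cyc orbit_sub[OF img l] orbit_closed orbit_self])
  hence "?m \<in> orbit ?f l" using mC by blast
  hence ex: "\<exists>k. (?f ^^ k) l = ?m" unfolding orbit_def by (auto simp: eq_commute)
  define K where "K = (LEAST k. (?f ^^ k) l = ?m)"
  have fK: "(?f ^^ K) l = ?m" unfolding K_def by (rule LeastI_ex[OF ex])
  have "(\<Sum>t<K. r ((?f ^^ t) l, (?f ^^ Suc t) l) - lam_pol n Vmax \<sigma> \<tau> r)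
      = (\<Sum>t<K. u ((?f ^^ t) l) - u ((?f ^^ Suc t) l))"
  proof (intro sum.cong refl)
    fix t
    have "(?f ^^ t) l \<in> verts n" using funpow_in[OF img l] .
    hence "lam + u ((?f ^^ t) l) = r ((?f ^^ t) l, (?f ^^ Suc t) l) + u ((?f ^^ Suc t) l)"
      using eq by simp
    thus "r ((?f ^^ t) l, (?f ^^ Suc t) l) - lam_pol n Vmax \<sigma> \<tau> r = u ((?f ^^ t) l) - u ((?f ^^ Suc t) l)"
      using \<open>lam_pol n Vmax \<sigma> \<tau> r = lam\<close> by simp
  qed
  also have "\<dots> = u l - u ?m" using sum_lessThan_telescope'[of "\<lambda>t. u ((?f ^^ t) l)" K] fK by simp
  finally show "u_pol n Vmax \<sigma> \<tau> r l = u l - u ?m"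
    unfolding u_pol_def Let_def K_def by simp
qed



lemma vmin_cases: "k \<in> verts n \<Longrightarrow> k \<notin> Vmax \<Longrightarrow> k \<in> Vmin n Vmax"
  unfolding Vmin_def by auto

lemma E_verts: "game_graph n E Vmax \<Longrightarrow> (k, l) \<in> E \<Longrightarrow> l \<in> verts n \<and> k \<in> verts n"
  unfolding game_graph_def by auto

lemma uniq:
  assumes gg: "game_graph n E Vmax" and xi: "(\<sigma>, \<tau>) \<in> Xi n E Vmax"
    and st: "strict n E Vmax r \<sigma> \<tau> lam u"
    and pp': "policy_pair n E Vmax \<sigma>' \<tau>'" and b': "bi n E Vmax r \<sigma>' \<tau>' lam' u'"
  shows "\<sigma>' = \<sigma> \<and> \<tau>' = \<tau>"
proof -
  let ?V = "verts n"
  let ?f = "succ Vmax \<sigma> \<tau>"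
  define e where "e k = u k - u' k" for k
  have pp: "policy_pair n E Vmax \<sigma> \<tau>" and b: "bi n E Vmax r \<sigma> \<tau> lam u"
    and sx: "\<And>k l. k \<in> Vmax \<Longrightarrow> (k,l)\<in>E \<Longrightarrow> l \<noteq> \<sigma> k \<Longrightarrow> r(k,l)+u l < lam+u k"
    and sn: "\<And>k l. k \<in> Vmin n Vmax \<Longrightarrow> (k,l)\<in>E \<Longrightarrow> l \<noteq> \<tau> k \<Longrightarrow> lam+u k < r(k,l)+u l"
    using st unfolding strict_def by auto
  have img: "?f ` ?V \<subseteq> ?V" using f_img[OF gg pp] .
  note cyc = Xi_cyc[OF xi]
  note cp = cycle_props[OF fin_verts img cyc]
  have Vne: "?V \<noteq> {}" using cp(2,3) by blast
  have finE: "finite (e ` ?V)" using fin_verts by simp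
  have neE: "e ` ?V \<noteq> {}" using Vne by simp
  define M where "M = Max (e ` ?V)"
  define m where "m = Min (e ` ?V)"
  have leM: "\<And>k. k \<in> ?V \<Longrightarrow> e k \<le> M" unfolding M_def using finE by simp
  have gem: "\<And>k. k \<in> ?V \<Longrightarrow> m \<le> e k" unfolding m_def using finE by simp
  obtain kM where kM: "kM \<in> ?V" "e kM = M" using Max_in[OF finE neE] unfolding M_def by auto
  obtain km where km: "km \<in> ?V" "e km = m" using Min_in[OF finE neE] unfolding m_def by auto
  have h: "\<exists>l\<in>?V. e k \<le> e l + (lam' - lam)" if k: "k \<in> ?V" for k
  proof (cases "k \<in> Vmax")
    case True
    have E1: "(k, \<sigma> k) \<in> E" using pp True unfolding policy_pair_def by auto
    have "r(k,\<sigma> k)+u(\<sigma> k) = lam+u k" using b True unfolding bi_def by auto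
    moreover have "r(k,\<sigma> k)+u'(\<sigma> k) \<le> lam'+u' k" using b' True E1 unfolding bi_def by auto
    ultimately show ?thesis using E_verts[OF gg E1] unfolding e_def by (intro bexI[of _ "\<sigma> k"]) auto
  next
    case False hence kn: "k \<in> Vmin n Vmax" using vmin_cases k by auto
    have E1: "(k, \<tau>' k) \<in> E" using pp' kn unfolding policy_pair_def by auto
    have "r(k,\<tau>' k)+u'(\<tau>' k) = lam'+u' k" using b' kn unfolding bi_def by auto
    moreover have "lam+u k \<le> r(k,\<tau>' k)+u(\<tau>' k)" using b kn E1 unfolding bi_def by auto
    ultimately show ?thesis using E_verts[OF gg E1] unfolding e_def by (intro bexI[of _ "\<tau>' k"]) auto
  qed
  have g: "\<exists>l\<in>?V. e k \<ge> e l + (lam' - lam)" if k: "k \<in> ?V" for k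
  proof (cases "k \<in> Vmax")
    case True
    have E1: "(k, \<sigma>' k) \<in> E" using pp' True unfolding policy_pair_def by auto
    have "r(k,\<sigma>' k)+u'(\<sigma>' k) = lam'+u' k" using b' True unfolding bi_def by auto
    moreover have "r(k,\<sigma>' k)+u(\<sigma>' k) \<le> lam+u k" using b True E1 unfolding bi_def by auto
    ultimately show ?thesis using E_verts[OF gg E1] unfolding e_def by (intro bexI[of _ "\<sigma>' k"]) auto
  next
    case False hence kn: "k \<in> Vmin n Vmax" using vmin_cases k by auto
    have E1: "(k, \<tau> k) \<in> E" using pp kn unfolding policy_pair_def by auto
    have "r(k,\<tau> k)+u(\<tau> k) = lam+u k" using b kn unfolding bi_def by auto
    moreover have "lam'+u' k \<le> r(k,\<tau> k)+u'(\<tau> k)" using b' kn E1 unfolding bi_def by auto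
    ultimately show ?thesis using E_verts[OF gg E1] unfolding e_def by (intro bexI[of _ "\<tau> k"]) auto
  qed
  have d1: "lam' - lam \<ge> 0" using h[OF kM(1)] leM kM(2) by force
  have d2: "lam' - lam \<le> 0" using g[OF km(1)] gem km(2) by force
  have lam': "lam' = lam" using d1 d2 by simp
  define A where "A = {k\<in>?V. e k = M}"
  define B where "B = {k\<in>?V. e k = m}"
  have clA: "?f ` A \<subseteq> A"
  proof
    fix y assume "y \<in> ?f ` A"
    then obtain k where k: "k \<in> ?V" "e k = M" "y = ?f k" unfolding A_def by blast
    show "y \<in> A"
    proof (cases "k \<in> Vmax")
      case True
      have E1: "(k, \<sigma> k) \<in> E" using pp True unfolding policy_pair_def by auto
      have "r(k,\<sigma> k)+u(\<sigma> k) = lam+u k" using b True unfolding bi_def by auto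
      moreover have "r(k,\<sigma> k)+u'(\<sigma> k) \<le> lam'+u' k" using b' True E1 unfolding bi_def by auto
      ultimately have "e (\<sigma> k) \<ge> M" using k lam' unfolding e_def by auto
      moreover have "\<sigma> k \<in> ?V" using E_verts[OF gg E1] by simp
      ultimately show ?thesis using leM[of "\<sigma> k"] k True unfolding A_def succ_def by auto
    next
      case False hence kn: "k \<in> Vmin n Vmax" using vmin_cases k by auto
      have E1: "(k, \<tau>' k) \<in> E" using pp' kn unfolding policy_pair_def by auto
      have t1: "r(k,\<tau>' k)+u'(\<tau>' k) = lam'+u' k" using b' kn unfolding bi_def by auto
      have t2: "lam+u k \<le> r(k,\<tau>' k)+u(\<tau>' k)" using b kn E1 unfolding bi_def by auto
      have vt: "\<tau>' k \<in> ?V" using E_verts[OF gg E1] by simp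
      have "e (\<tau>' k) \<ge> M" using t1 t2 k lam' unfolding e_def by auto
      hence eq: "e (\<tau>' k) = M" using leM[OF vt] by simp
      hence "lam+u k = r(k,\<tau>' k)+u(\<tau>' k)" using t1 k lam' unfolding e_def by auto
      hence "\<tau>' k = \<tau> k" using sn[OF kn E1] by force
      thus ?thesis using eq vt k False unfolding A_def succ_def by auto
    qed
  qed
  have clB: "?f ` B \<subseteq> B"
  proof
    fix y assume "y \<in> ?f ` B"
    then obtain k where k: "k \<in> ?V" "e k = m" "y = ?f k" unfolding B_def by blast
    show "y \<in> B"
    proof (cases "k \<in> Vmax")
      case True
      have E1: "(k, \<sigma>' k) \<in> E" using pp' True unfolding policy_pair_def by auto
      have t1: "r(k,\<sigma>' k)+u'(\<sigma>' k) = lam'+u' k" using b' True unfolding bi_def by auto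
      have t2: "r(k,\<sigma>' k)+u(\<sigma>' k) \<le> lam+u k" using b True E1 unfolding bi_def by auto
      have vt: "\<sigma>' k \<in> ?V" using E_verts[OF gg E1] by simp
      have "e (\<sigma>' k) \<le> m" using t1 t2 k lam' unfolding e_def by auto
      hence eq: "e (\<sigma>' k) = m" using gem[OF vt] by simp
      hence "lam+u k = r(k,\<sigma>' k)+u(\<sigma>' k)" using t1 k lam' unfolding e_def by auto
      hence "\<sigma>' k = \<sigma> k" using sx[OF True E1] by force
      thus ?thesis using eq vt k True unfolding B_def succ_def by auto
    next
      case False hence kn: "k \<in> Vmin n Vmax" using vmin_cases k by auto
      have E1: "(k, \<tau> k) \<in> E" using pp kn unfolding policy_pair_def by auto
      have "r(k,\<tau> k)+u(\<tau> k) = lam+u k" using b kn unfolding bi_def by auto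
      moreover have "lam'+u' k \<le> r(k,\<tau> k)+u'(\<tau> k)" using b' kn E1 unfolding bi_def by auto
      ultimately have "e (\<tau> k) \<le> m" using k lam' unfolding e_def by auto
      moreover have "\<tau> k \<in> ?V" using E_verts[OF gg E1] by simp
      ultimately show ?thesis using gem[of "\<tau> k"] k False unfolding B_def succ_def by auto
    qed
  qed
  have CA: "the_cycle n Vmax \<sigma> \<tau> \<subseteq> A"
    by (rule cycle_in_closed[OF fin_verts img cyc _ clA, of kM]) (use kM in \<open>auto simp: A_def\<close>)
  have CB: "the_cycle n Vmax \<sigma> \<tau> \<subseteq> B"
    by (rule cycle_in_closed[OF fin_verts img cyc _ clB, of km]) (use km in \<open>auto simp: B_def\<close>)
  obtain c where "c \<in> the_cycle n Vmax \<sigma> \<tau>" using cp(2) by blast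
  hence Mm: "M = m" using CA CB unfolding A_def B_def by auto
  have econst: "\<And>k. k \<in> ?V \<Longrightarrow> e k = M" using leM gem Mm by (meson order_antisym)
  have "\<sigma>' = \<sigma>"
  proof
    fix k show "\<sigma>' k = \<sigma> k"
    proof (cases "k \<in> Vmax")
      case True
      have E1: "(k, \<sigma>' k) \<in> E" using pp' True unfolding policy_pair_def by auto
      have t1: "r(k,\<sigma>' k)+u'(\<sigma>' k) = lam'+u' k" using b' True unfolding bi_def by auto
      have "k \<in> ?V" "\<sigma>' k \<in> ?V" using E_verts[OF gg E1] by auto
      hence "u k - u' k = M" "u (\<sigma>' k) - u' (\<sigma>' k) = M" using econst unfolding e_def by auto
      hence "lam+u k = r(k,\<sigma>' k)+u(\<sigma>' k)" using t1 lam' by linarith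
      thus ?thesis using sx[OF True E1] by force
    next
      case False thus ?thesis using pp pp' unfolding policy_pair_def by auto
    qed
  qed
  moreover have "\<tau>' = \<tau>"
  proof
    fix k show "\<tau>' k = \<tau> k"
    proof (cases "k \<in> Vmin n Vmax")
      case True
      have E1: "(k, \<tau>' k) \<in> E" using pp' True unfolding policy_pair_def by auto
      have t1: "r(k,\<tau>' k)+u'(\<tau>' k) = lam'+u' k" using b' True unfolding bi_def by auto
      have "k \<in> ?V" "\<tau>' k \<in> ?V" using E_verts[OF gg E1] by auto
      hence "u k - u' k = M" "u (\<tau>' k) - u' (\<tau>' k) = M" using econst unfolding e_def by auto
      hence "lam+u k = r(k,\<tau>' k)+u(\<tau>' k)" using t1 lam' by linarith
      thus ?thesis using sn[OF True E1] by force
    next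
      case False thus ?thesis using pp pp' unfolding policy_pair_def by auto
    qed
  qed
  ultimately show ?thesis by simp
qed

lemma strict_of_P:
  assumes gg: "game_graph n E Vmax" and P: "r \<in> P_pol n E Vmax \<sigma> \<tau>"
  shows "\<exists>lam u. strict n E Vmax r \<sigma> \<tau> lam u"
proof -
  have P': "\<And>\<sigma>' \<tau>'. bias_induced n E Vmax r \<sigma>' \<tau>' \<longleftrightarrow> \<sigma>' = \<sigma> \<and> \<tau>' = \<tau>" using P unfolding P_pol_def by auto
  have "bias_induced n E Vmax r \<sigma> \<tau>" using P' by simp
  then obtain lam u where pp: "policy_pair n E Vmax \<sigma> \<tau>" and b: "bi n E Vmax r \<sigma> \<tau> lam u"
    using bias_induced_iff[OF gg] by blast
  have sx: "r(k,l)+u l < lam+u k" if k: "k \<in> Vmax" and E1: "(k,l)\<in>E" and ne: "l \<noteq> \<sigma> k" for k l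
  proof (rule ccontr)
    assume "\<not> ?thesis"
    hence eq: "r(k,l)+u l = lam+u k" using b k E1 unfolding bi_def by force
    have "policy_pair n E Vmax (\<sigma>(k:=l)) \<tau>" using pp k E1 unfolding policy_pair_def by auto
    moreover have "bi n E Vmax r (\<sigma>(k:=l)) \<tau> lam u" using b eq unfolding bi_def by auto
    ultimately have "bias_induced n E Vmax r (\<sigma>(k:=l)) \<tau>" using bias_induced_iff[OF gg] by blast
    hence "\<sigma>(k:=l) = \<sigma>" using P' by blast
    hence "l = \<sigma> k" by (metis fun_upd_same)
    thus False using ne by simp
  qed
  have sn: "lam+u k < r(k,l)+u l" if k: "k \<in> Vmin n Vmax" and E1: "(k,l)\<in>E" and ne: "l \<noteq> \<tau> k" for k l
  proof (rule ccontr)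
    assume "\<not> ?thesis"
    hence eq: "r(k,l)+u l = lam+u k" using b k E1 unfolding bi_def by force
    have kv: "k \<notin> Vmax" using k unfolding Vmin_def by auto
    have "policy_pair n E Vmax \<sigma> (\<tau>(k:=l))" using pp k E1 unfolding policy_pair_def by auto
    moreover have "bi n E Vmax r \<sigma> (\<tau>(k:=l)) lam u" using b eq unfolding bi_def by auto
    ultimately have "bias_induced n E Vmax r \<sigma> (\<tau>(k:=l))" using bias_induced_iff[OF gg] by blast
    hence "\<tau>(k:=l) = \<tau>" using P' by blast
    hence "l = \<tau> k" by (metis fun_upd_same)
    thus False using ne by simp
  qed
  show ?thesis unfolding strict_def using pp b sx sn by blast
qed



lemma update_strict_max:
  assumes st: "strict n E Vmax r \<sigma> \<tau> lam u" and i: "i \<in> Vmax" and ne: "j \<noteq> \<sigma> i"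
    and lt: "x + u j < lam + u i"
  shows "strict n E Vmax (r((i,j):=x)) \<sigma> \<tau> lam u"
proof -
  have iv: "i \<notin> Vmin n Vmax" using i unfolding Vmin_def by auto
  have k1: "\<And>k. k \<in> Vmax \<Longrightarrow> (r((i,j):=x)) (k, \<sigma> k) = r (k, \<sigma> k)" using ne by auto
  have k2: "\<And>k l. k \<in> Vmin n Vmax \<Longrightarrow> (r((i,j):=x)) (k, l) = r (k, l)" using iv by auto
  show ?thesis using st lt k1 k2 unfolding strict_def bi_def
    by (auto simp: fun_upd_apply split: if_splits)
qed

lemma update_strict_min:
  assumes st: "strict n E Vmax r \<sigma> \<tau> lam u" and i: "i \<in> Vmin n Vmax" and ne: "j \<noteq> \<tau> i"
    and lt: "lam + u i < x + u j"
  shows "strict n E Vmax (r((i,j):=x)) \<sigma> \<tau> lam u"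
proof -
  have iv: "i \<notin> Vmax" using i unfolding Vmin_def by auto
  have k1: "\<And>k. k \<in> Vmin n Vmax \<Longrightarrow> (r((i,j):=x)) (k, \<tau> k) = r (k, \<tau> k)" using ne by auto
  have k2: "\<And>k l. k \<in> Vmax \<Longrightarrow> (r((i,j):=x)) (k, l) = r (k, l)" using iv by auto
  show ?thesis using st lt k1 k2 unfolding strict_def bi_def
    by (auto simp: fun_upd_apply split: if_splits)
qed

lemma in_P_of_strict:
  assumes gg: "game_graph n E Vmax" and xi: "(\<sigma>, \<tau>) \<in> Xi n E Vmax"
    and st: "strict n E Vmax r \<sigma> \<tau> lam u"
  shows "r \<in> P_pol n E Vmax \<sigma> \<tau>" "r \<in> U_set n E Vmax" "bias_induced n E Vmax r \<sigma> \<tau>"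
proof -
  show bi0: "bias_induced n E Vmax r \<sigma> \<tau>" using st bias_induced_iff[OF gg] unfolding strict_def by blast
  have "\<sigma>' = \<sigma> \<and> \<tau>' = \<tau>" if bb: "bias_induced n E Vmax r \<sigma>' \<tau>'" for \<sigma>' \<tau>'
  proof -
    obtain lam' u' where "policy_pair n E Vmax \<sigma>' \<tau>'" "bi n E Vmax r \<sigma>' \<tau>' lam' u'"
      using bb bias_induced_iff[OF gg] by blast
    thus ?thesis by (rule uniq[OF gg xi st])
  qed
  hence P: "r \<in> P_pol n E Vmax \<sigma> \<tau>" unfolding P_pol_def mem_Collect_eq
    using bi0 by (metis prod.inject)
  thus "r \<in> P_pol n E Vmax \<sigma> \<tau>" .
  show "r \<in> U_set n E Vmax" unfolding U_set_def
    by (rule UN_I[of "(\<sigma>, \<tau>)"]) (use xi P in simp_all)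
qed

lemma transfer_max:
  assumes b: "bi n E Vmax (r((i,j):=x)) \<sigma>' \<tau>' lam u" and i: "i \<in> Vmax" and ne: "\<sigma>' i \<noteq> j"
    and le: "r (i,j) \<le> x"
  shows "bi n E Vmax r \<sigma>' \<tau>' lam u"
proof -
  let ?r = "r((i,j):=x)"
  have iv: "i \<notin> Vmin n Vmax" using i unfolding Vmin_def by auto
  have hx: "\<And>k l. k \<in> Vmax \<Longrightarrow> (k,l) \<in> E \<Longrightarrow> ?r (k,l) + u l \<le> lam + u k"
    and hx2: "\<And>k. k \<in> Vmax \<Longrightarrow> ?r (k,\<sigma>' k) + u (\<sigma>' k) = lam + u k"
    and hn: "\<And>k l. k \<in> Vmin n Vmax \<Longrightarrow> (k,l) \<in> E \<Longrightarrow> lam + u k \<le> ?r (k,l) + u l"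
    and hn2: "\<And>k. k \<in> Vmin n Vmax \<Longrightarrow> ?r (k,\<tau>' k) + u (\<tau>' k) = lam + u k"
    using b unfolding bi_def by blast+
  have p1: "r (k,l) + u l \<le> lam + u k" if k: "k \<in> Vmax" and kl: "(k,l) \<in> E" for k l
  proof (cases "(k,l) = (i,j)")
    case True
    have "?r (k,l) = x" using True by simp
    thus ?thesis using hx[OF k kl] le True by simp
  next
    case False
    hence "?r (k,l) = r (k,l)" by (rule fun_upd_other)
    thus ?thesis using hx[OF k kl] by simp
  qed
  have p2: "r (k,\<sigma>' k) + u (\<sigma>' k) = lam + u k" if k: "k \<in> Vmax" for k
  proof -
    have "(k, \<sigma>' k) \<noteq> (i,j)" using ne by auto
    hence "?r (k,\<sigma>' k) = r (k,\<sigma>' k)" by (rule fun_upd_other)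
    thus ?thesis using hx2[OF k] by simp
  qed
  have p3: "lam + u k \<le> r (k,l) + u l" if k: "k \<in> Vmin n Vmax" and kl: "(k,l) \<in> E" for k l
  proof -
    have "(k, l) \<noteq> (i,j)" using k iv by auto
    hence "?r (k,l) = r (k,l)" by (rule fun_upd_other)
    thus ?thesis using hn[OF k kl] by simp
  qed
  have p4: "r (k,\<tau>' k) + u (\<tau>' k) = lam + u k" if k: "k \<in> Vmin n Vmax" for k
  proof -
    have "(k, \<tau>' k) \<noteq> (i,j)" using k iv by auto
    hence "?r (k,\<tau>' k) = r (k,\<tau>' k)" by (rule fun_upd_other)
    thus ?thesis using hn2[OF k] by simp
  qed
  show ?thesis unfolding bi_def using p1 p2 p3 p4 by blast
qed

lemma transfer_min:
  assumes b: "bi n E Vmax (r((i,j):=x)) \<sigma>' \<tau>' lam u" and i: "i \<in> Vmin n Vmax" and ne: "\<tau>' i \<noteq> j"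
    and le: "x \<le> r (i,j)"
  shows "bi n E Vmax r \<sigma>' \<tau>' lam u"
proof -
  let ?r = "r((i,j):=x)"
  have iv: "i \<notin> Vmax" using i unfolding Vmin_def by auto
  have hx: "\<And>k l. k \<in> Vmax \<Longrightarrow> (k,l) \<in> E \<Longrightarrow> ?r (k,l) + u l \<le> lam + u k"
    and hx2: "\<And>k. k \<in> Vmax \<Longrightarrow> ?r (k,\<sigma>' k) + u (\<sigma>' k) = lam + u k"
    and hn: "\<And>k l. k \<in> Vmin n Vmax \<Longrightarrow> (k,l) \<in> E \<Longrightarrow> lam + u k \<le> ?r (k,l) + u l"
    and hn2: "\<And>k. k \<in> Vmin n Vmax \<Longrightarrow> ?r (k,\<tau>' k) + u (\<tau>' k) = lam + u k"
    using b unfolding bi_def by blast+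
  have p1: "r (k,l) + u l \<le> lam + u k" if k: "k \<in> Vmax" and kl: "(k,l) \<in> E" for k l
  proof -
    have "(k, l) \<noteq> (i,j)" using k iv by auto
    hence "?r (k,l) = r (k,l)" by (rule fun_upd_other)
    thus ?thesis using hx[OF k kl] by simp
  qed
  have p2: "r (k,\<sigma>' k) + u (\<sigma>' k) = lam + u k" if k: "k \<in> Vmax" for k
  proof -
    have "(k, \<sigma>' k) \<noteq> (i,j)" using k iv by auto
    hence "?r (k,\<sigma>' k) = r (k,\<sigma>' k)" by (rule fun_upd_other)
    thus ?thesis using hx2[OF k] by simp
  qed
  have p3: "lam + u k \<le> r (k,l) + u l" if k: "k \<in> Vmin n Vmax" and kl: "(k,l) \<in> E" for k l
  proof (cases "(k,l) = (i,j)")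
    case True
    have "?r (k,l) = x" using True by simp
    thus ?thesis using hn[OF k kl] le True by simp
  next
    case False
    hence "?r (k,l) = r (k,l)" by (rule fun_upd_other)
    thus ?thesis using hn[OF k kl] by simp
  qed
  have p4: "r (k,\<tau>' k) + u (\<tau>' k) = lam + u k" if k: "k \<in> Vmin n Vmax" for k
  proof -
    have "(k, \<tau>' k) \<noteq> (i,j)" using ne by auto
    hence "?r (k,\<tau>' k) = r (k,\<tau>' k)" by (rule fun_upd_other)
    thus ?thesis using hn2[OF k] by simp
  qed
  show ?thesis unfolding bi_def using p1 p2 p3 p4 by blast
qed



lemma pol_eq:
  assumes gg: "game_graph n E Vmax" and xi: "(\<sigma>, \<tau>) \<in> Xi n E Vmax"
    and b: "bi n E Vmax r' \<sigma> \<tau> lam u"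
    and same: "\<forall>k \<in> verts n. r' (k, succ Vmax \<sigma> \<tau> k) = r (k, succ Vmax \<sigma> \<tau> k)"
  shows "lam_pol n Vmax \<sigma> \<tau> r = lam"
    "\<And>l. l \<in> verts n \<Longrightarrow> u_pol n Vmax \<sigma> \<tau> r l = u l - u (Min (the_cycle n Vmax \<sigma> \<tau>))"
proof -
  have "\<forall>k\<in>verts n. lam + u k = r (k, succ Vmax \<sigma> \<tau> k) + u (succ Vmax \<sigma> \<tau> k)"
    using along_f[OF gg b] same by simp
  note lu = lam_u_pol[OF gg xi this]
  show "lam_pol n Vmax \<sigma> \<tau> r = lam" by (rule lu(1))
  show "\<And>l. l \<in> verts n \<Longrightarrow> u_pol n Vmax \<sigma> \<tau> r l = u l - u (Min (the_cycle n Vmax \<sigma> \<tau>))"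
    by (rule lu(2))
qed

theorem mainTheorem13:
  fixes n :: nat and E :: "(nat \<times> nat) set" and Vmax :: "nat set"
    and r :: "nat \<times> nat \<Rightarrow> real" and \<sigma> \<tau> :: "nat \<Rightarrow> nat" and i j :: nat
  assumes "game_graph n E Vmax"
    and "ergodic_graph n E Vmax"
    and "(\<sigma>, \<tau>) \<in> Xi n E Vmax"
    and "r \<in> P_pol n E Vmax \<sigma> \<tau>"
    and "(i, j) \<in> E"
    and "(i \<in> Vmax \<and> j \<noteq> \<sigma> i) \<or> (i \<in> Vmin n Vmax \<and> j \<noteq> \<tau> i)"
  shows "Z n E Vmax r i j
           = lam_pol n Vmax \<sigma> \<tau> r + u_pol n Vmax \<sigma> \<tau> r i - u_pol n Vmax \<sigma> \<tau> r j"
proof -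
  note gg = assms(1) and xi = assms(3) and P = assms(4) and ij = assms(5)
  have P': "\<And>\<sigma>' \<tau>'. bias_induced n E Vmax r \<sigma>' \<tau>' \<Longrightarrow> \<sigma>' = \<sigma> \<and> \<tau>' = \<tau>"
    using P unfolding P_pol_def by auto
  obtain lam0 u0 where st: "strict n E Vmax r \<sigma> \<tau> lam0 u0" using strict_of_P[OF gg P] by blast
  have pp: "policy_pair n E Vmax \<sigma> \<tau>" and b: "bi n E Vmax r \<sigma> \<tau> lam0 u0"
    and sx: "\<And>k l. k \<in> Vmax \<Longrightarrow> (k,l)\<in>E \<Longrightarrow> l \<noteq> \<sigma> k \<Longrightarrow> r(k,l)+u0 l < lam0+u0 k"
    and sn: "\<And>k l. k \<in> Vmin n Vmax \<Longrightarrow> (k,l)\<in>E \<Longrightarrow> l \<noteq> \<tau> k \<Longrightarrow> lam0+u0 k < r(k,l)+u0 l"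
    using st unfolding strict_def by auto
  let ?f = "succ Vmax \<sigma> \<tau>"
  let ?m = "Min (the_cycle n Vmax \<sigma> \<tau>)"
  note lu = pol_eq[OF gg xi b, of r, simplified]
  have iv: "i \<in> verts n" "j \<in> verts n" using E_verts[OF gg ij] by auto
  define T where "T = lam0 + u0 i - u0 j"
  have rhs: "lam_pol n Vmax \<sigma> \<tau> r + u_pol n Vmax \<sigma> \<tau> r i - u_pol n Vmax \<sigma> \<tau> r j = T"
    using lu(1) lu(2)[OF iv(1)] lu(2)[OF iv(2)] unfolding T_def by simp
  have fixed: "lam' = lam0 \<and> u' i - u' j = u0 i - u0 j"
    if bx: "bi n E Vmax (r((i,j):=x)) \<sigma> \<tau> lam' u'" for x lam' u'
  proof -
    have same: "\<forall>k\<in>verts n. (r((i,j):=x)) (k, ?f k) = r (k, ?f k)"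
    proof
      fix k
      have "(k, ?f k) \<noteq> (i,j)" using assms(6) unfolding succ_def Vmin_def by auto
      thus "(r((i,j):=x)) (k, ?f k) = r (k, ?f k)" by (rule fun_upd_other)
    qed
    note lu' = pol_eq[OF gg xi bx same]
    show ?thesis using lu'(1) lu'(2)[OF iv(1)] lu'(2)[OF iv(2)] lu(1) lu(2)[OF iv(1)] lu(2)[OF iv(2)]
      by simp
  qed
  show ?thesis
  proof (cases "i \<in> Vmax")
    case True
    hence ne: "j \<noteq> \<sigma> i" and iVm: "i \<notin> Vmin n Vmax" using assms(6) unfolding Vmin_def by auto
    define S where "S = {x. r((i, j) := x) \<in> U_set n E Vmax \<and>
               (\<exists>\<sigma>' \<tau>'. (\<sigma>', \<tau>') \<in> Xi n E Vmax \<and> bias_induced n E Vmax (r((i, j) := x)) \<sigma>' \<tau>' \<and> \<sigma>' i \<noteq> j)}"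
    have Zeq: "Z n E Vmax r i j = Sup S" unfolding Z_def S_def using iVm by simp
    have rlt: "r (i,j) < T" using sx[OF True ij ne] unfolding T_def by simp
    have inS: "x \<in> S" if x: "x < T" for x
    proof -
      have "strict n E Vmax (r((i,j):=x)) \<sigma> \<tau> lam0 u0"
        by (rule update_strict_max[OF st True ne]) (use x in \<open>simp add: T_def\<close>)
      note ip = in_P_of_strict[OF gg xi this]
      show ?thesis unfolding S_def using ip(2,3) xi ne by blast
    qed
    have upS: "x \<le> T" if x: "x \<in> S" for x
    proof (cases "x \<le> r (i,j)")
      case True thus ?thesis using rlt by simp
    next
      case False
      obtain \<sigma>' \<tau>' where bd: "bias_induced n E Vmax (r((i, j) := x)) \<sigma>' \<tau>'" and ne': "\<sigma>' i \<noteq> j"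
        using x unfolding S_def by blast
      obtain lam' u' where pp': "policy_pair n E Vmax \<sigma>' \<tau>'" and b': "bi n E Vmax (r((i, j) := x)) \<sigma>' \<tau>' lam' u'"
        using bd bias_induced_iff[OF gg] by blast
      have "bi n E Vmax r \<sigma>' \<tau>' lam' u'" using transfer_max[OF b' True ne'] False by simp
      hence "bias_induced n E Vmax r \<sigma>' \<tau>'" using pp' bias_induced_iff[OF gg] by blast
      hence eqs: "\<sigma>' = \<sigma>" "\<tau>' = \<tau>" using P' by auto
      have fx: "lam' = lam0 \<and> u' i - u' j = u0 i - u0 j" using fixed[of x lam' u'] b' eqs by simp
      have "(r((i, j) := x)) (i,j) + u' j \<le> lam' + u' i" using b' True ij unfolding bi_def by blast
      thus ?thesis using fx unfolding T_def by simp
    qed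
    have "Sup S = T"
    proof (rule cSup_eq_non_empty)
      show "S \<noteq> {}" using inS[of "T - 1"] by auto
      show "\<And>x. x \<in> S \<Longrightarrow> x \<le> T" by (rule upS)
      fix y assume h: "\<And>x. x \<in> S \<Longrightarrow> x \<le> y"
      show "T \<le> y"
      proof (rule ccontr)
        assume "\<not> T \<le> y"
        hence "(y + T) / 2 < T" "y < (y + T) / 2" by auto
        thus False using h[OF inS[of "(y + T) / 2"]] by linarith
      qed
    qed
    thus ?thesis using Zeq rhs by simp
  next
    case False
    hence ne: "j \<noteq> \<tau> i" and iVm: "i \<in> Vmin n Vmax" using assms(6) by auto
    define S where "S = {x. r((i, j) := x) \<in> U_set n E Vmax \<and>
               (\<exists>\<sigma>' \<tau>'. (\<sigma>', \<tau>') \<in> Xi n E Vmax \<and> bias_induced n E Vmax (r((i, j) := x)) \<sigma>' \<tau>' \<and> \<tau>' i \<noteq> j)}"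
    have Zeq: "Z n E Vmax r i j = Inf S" unfolding Z_def S_def using iVm by simp
    have rlt: "T < r (i,j)" using sn[OF iVm ij ne] unfolding T_def by simp
    have inS: "x \<in> S" if x: "T < x" for x
    proof -
      have "strict n E Vmax (r((i,j):=x)) \<sigma> \<tau> lam0 u0"
        by (rule update_strict_min[OF st iVm ne]) (use x in \<open>simp add: T_def\<close>)
      note ip = in_P_of_strict[OF gg xi this]
      show ?thesis unfolding S_def using ip(2,3) xi ne by blast
    qed
    have upS: "T \<le> x" if x: "x \<in> S" for x
    proof (cases "r (i,j) \<le> x")
      case True thus ?thesis using rlt by simp
    next
      case False
      obtain \<sigma>' \<tau>' where bd: "bias_induced n E Vmax (r((i, j) := x)) \<sigma>' \<tau>'" and ne': "\<tau>' i \<noteq> j"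
        using x unfolding S_def by blast
      obtain lam' u' where pp': "policy_pair n E Vmax \<sigma>' \<tau>'" and b': "bi n E Vmax (r((i, j) := x)) \<sigma>' \<tau>' lam' u'"
        using bd bias_induced_iff[OF gg] by blast
      have "bi n E Vmax r \<sigma>' \<tau>' lam' u'" using transfer_min[OF b' iVm ne'] False by simp
      hence "bias_induced n E Vmax r \<sigma>' \<tau>'" using pp' bias_induced_iff[OF gg] by blast
      hence eqs: "\<sigma>' = \<sigma>" "\<tau>' = \<tau>" using P' by auto
      have fx: "lam' = lam0 \<and> u' i - u' j = u0 i - u0 j" using fixed[of x lam' u'] b' eqs by simp
      have "lam' + u' i \<le> (r((i, j) := x)) (i,j) + u' j" using b' iVm ij unfolding bi_def by blast
      thus ?thesis using fx unfolding T_def by simp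
    qed
    have "Inf S = T"
    proof (rule cInf_eq_non_empty)
      show "S \<noteq> {}" using inS[of "T + 1"] by auto
      show "\<And>x. x \<in> S \<Longrightarrow> T \<le> x" by (rule upS)
      fix y assume h: "\<And>x. x \<in> S \<Longrightarrow> y \<le> x"
      show "y \<le> T"
      proof (rule ccontr)
        assume "\<not> y \<le> T"
        hence "T < (y + T) / 2" "(y + T) / 2 < y" by auto
        thus False using h[OF inS[of "(y + T) / 2"]] by linarith
      qed
    qed
    thus ?thesis using Zeq rhs by simp
  qed
qed

end
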